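(* Let $\alpha>-1$, $\alpha\ne0$, let $\eta_1=\eta_1(\alpha)\in(0,1)$ be the root of $\eta^\alpha=\dfrac{1}{1+\alpha(\eta+1)}$, and let $$\psi_0(\alpha,\eta)=\dfrac{(1+\eta^{\alpha+1})^{1/\alpha}}{(1+\eta)^{(\alpha+1)/\alpha}}+\dfrac{(\alpha+1)^{(\alpha+1)/\alpha}}{\alpha}\left[\dfrac1{1+\eta^{\alpha+1}}-\dfrac1{1+\eta}\right].$$ Then the function $\eta\mapsto\psi_0(\alpha,\eta)$ attains its maximal value on $[0,\eta_1]$ at an interior point $\eta_{\max}=\eta_{\max}(\alpha)\in(0,\eta_1)$, at which $\dfrac{\partial}{\partial\eta}\psi_0(\alpha,\eta_{\max})=0$. *)

theory Defs
  imports Complex_Main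
begin

definition psi0 :: "real \<Rightarrow> real \<Rightarrow> real" where
  "psi0 \<alpha> \<eta> =
     (1 + \<eta> powr (\<alpha> + 1)) powr (1 / \<alpha>) / (1 + \<eta>) powr ((\<alpha> + 1) / \<alpha>)
     + ((\<alpha> + 1) powr ((\<alpha> + 1) / \<alpha>) / \<alpha>)
       * (1 / (1 + \<eta> powr (\<alpha> + 1)) - 1 / (1 + \<eta>))"

end

theory Submission
  imports Defs
begin


definition Dpsi :: "real \<Rightarrow> real \<Rightarrow> real" where
 "Dpsi a x = (a+1)/a * ((1 + x powr (a+1)) powr (1/a) / (1+x) powr ((a+1)/a)) * (x powr a - 1)
      / ((1 + x powr (a+1)) * (1+x))
   + ((a+1) powr ((a+1)/a) / a) * (1/(1+x)^2 - (a+1) * x powr a / (1 + x powr (a+1))^2)"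


lemma alg1:
  fixes a p A B t x :: real
  assumes "B > 0" "x > 0" "a \<noteq> 0" "1 + t*x > 0"
  shows "p/a*(A/B)*(t-1)/((1+t*x)*(1+x)) = ((1/a)*(A/(1+t*x))*(p*t)*B - A*((p/a)*(B/(1+x))))/(B*B)"
proof -
  have h: "1 + x \<noteq> 0" "1+t*x \<noteq> 0" "B \<noteq> 0" using assms by auto
  have s1: "t/(1+t*x) - 1/(1+x) = (t-1)/((1+t*x)*(1+x))" using h by (simp add: field_simps) 
  have s2: "((1/a)*(A/(1+t*x))*(p*t)*B - A*((p/a)*(B/(1+x))))/(B*B) = p/a*(A/B)*(t/(1+t*x) - 1/(1+x))"
    using h by (simp add: right_diff_distrib diff_divide_distrib mult_ac)
  show ?thesis unfolding s2 s1 by simp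
qed

lemma psi0_deriv:
  fixes a x :: real assumes a: "a > -1" "a \<noteq> 0" and x: "x > 0"
  shows "((\<lambda>\<eta>. psi0 a \<eta>) has_real_derivative Dpsi a x) (at x)"
proof -
  define p where "p = a + 1"
  define u where "u = x powr p"
  have up: "u > 0" using x by (simp add: u_def)
  have d1: "((\<lambda>z. z powr p) has_real_derivative p * x powr a) (at x)"
    using has_real_derivative_powr[of x p] x by (simp add: p_def)
  have d1': "((\<lambda>z. 1 + z powr p) has_real_derivative p * x powr a) (at x)"
    using DERIV_add[OF DERIV_const d1] by simp
  have d2: "((\<lambda>z. (1 + z powr p) powr (1/a)) has_real_derivative (1/a) * (1 + u) powr (1/a - 1) * (p * x powr a)) (at x)"
    using DERIV_fun_powr[OF d1', of "1/a"] up by (simp add: u_def add_pos_pos)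
  have d3: "((\<lambda>z. (1+z) powr (p/a)) has_real_derivative (p/a) * (1+x) powr (p/a - 1)) (at x)"
    using DERIV_fun_powr[OF DERIV_add[OF DERIV_const DERIV_ident], of 1 x "p/a"] x by simp
  have d4: "((\<lambda>z. 1 / (1 + z powr p)) has_real_derivative - (p * x powr a) / (1+u)^2) (at x)"
  proof -
    have "1 + x powr p \<noteq> 0" using up by (simp add: u_def) (smt (verit) powr_ge_zero)
    from DERIV_inverse_fun[OF d1' this] show ?thesis by (simp add: u_def divide_inverse power2_eq_square)
  qed
  have d5: "((\<lambda>z. 1 / (1 + z)) has_real_derivative - 1 / (1+x)^2) (at x)"
  proof -
    have "1 + x \<noteq> 0" using x by simp
    from DERIV_inverse_fun[OF DERIV_add[OF DERIV_const DERIV_ident] this] show ?thesis by (simp add: divide_inverse power2_eq_square)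
  qed
  define A where "A = (1 + u) powr (1/a)"
  define B where "B = (1 + x) powr (p/a)"
  define C where "C = p powr (p/a)"
  have Bp: "B > 0" using x by (simp add: B_def)
  have Ap: "A > 0" using up by (simp add: A_def)
  have e1: "(1 + u) powr (1/a - 1) = A / (1 + u)" using up by (simp add: A_def powr_diff)
  have e2: "(1 + x) powr (p/a - 1) = B / (1 + x)" using x by (simp add: B_def powr_diff)
  have e3: "u = x powr a * x" using x by (simp add: u_def p_def powr_add)
  have q: "((\<lambda>z. (1 + z powr p) powr (1/a) / (1+z) powr (p/a)) has_real_derivative
       ((1/a) * (1 + u) powr (1/a - 1) * (p * x powr a) * B - A * ((p/a) * (1+x) powr (p/a - 1))) / (B * B)) (at x)"
    using DERIV_divide[OF d2 d3] Bp by (simp add: A_def B_def u_def)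
  have r: "((\<lambda>z. C / a * (1 / (1 + z powr p) - 1 / (1 + z))) has_real_derivative
       C / a * (- (p * x powr a) / (1+u)^2 - - 1 / (1+x)^2)) (at x)"
    by (rule DERIV_cmult[OF DERIV_diff[OF d4 d5]])
  have feq: "psi0 a = (\<lambda>z. (1 + z powr p) powr (1/a) / (1+z) powr (p/a) + C / a * (1 / (1 + z powr p) - 1 / (1 + z)))"
    by (simp add: psi0_def p_def C_def fun_eq_iff)
  have val: "((1/a) * (1 + u) powr (1/a - 1) * (p * x powr a) * B - A * ((p/a) * (1+x) powr (p/a - 1))) / (B * B)
      + C / a * (- (p * x powr a) / (1+u)^2 - - 1 / (1+x)^2) = Dpsi a x"
  proof -
    have "Dpsi a x = p/a * (A / B) * (x powr a - 1) / ((1 + u) * (1+x))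
        + (C / a) * (1/(1+x)^2 - p * x powr a / (1 + u)^2)"
      by (simp add: Dpsi_def p_def A_def B_def C_def u_def)
    also have "... = ((1/a) * (A / (1 + u)) * (p * x powr a) * B - A * ((p/a) * (B / (1+x)))) / (B * B)
      + C / a * (- (p * x powr a) / (1+u)^2 - - 1 / (1+x)^2)"
    proof -
      have "0 < 1 + x powr a * x" using up e3 by simp
      from alg1[OF Bp x a(2) this, of p A]
      have "p/a*(A/B)*(x powr a - 1)/((1+u)*(1+x)) = ((1/a)*(A/(1+u))*(p*x powr a)*B - A*((p/a)*(B/(1+x))))/(B*B)"
        unfolding e3 .
      then show ?thesis by (simp add: diff_divide_distrib)
    qed
    finally show ?thesis by (simp add: e1 e2)
  qed
  show ?thesis using DERIV_add[OF q r] unfolding feq val .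
qed
lemma Dpsi_eta1_neg:
  fixes a x :: real assumes a: "a > -1" "a \<noteq> 0" and x: "0 < x" "x < 1"
    and rel: "x powr a = 1 / (1 + a * (x + 1))"
  shows "Dpsi a x < 0"
proof -
  define p where "p = a + 1"
  define t where "t = x powr a"
  define K where "K = p powr (1/a)"
  have pp: "p > 0" using a by (simp add: p_def)
  have tp: "t > 0" using x by (simp add: t_def)
  have Kp: "K > 0" using pp by (simp add: K_def)
  have dpos: "1 + a * (x + 1) > 0"
  proof -
    have "0 < 1/(1 + a*(x+1))" using tp rel t_def by simp
    then show ?thesis by simp
  qed
  have r1: "t * (1 + a * (x + 1)) = 1" using rel dpos by (simp add: t_def)
  have sgn: "(t - 1) / a < 0"
  proof (cases "a > 0")
    case True
    have "t < 1" using powr_less_mono2[OF True _ x(2)] x by (simp add: t_def)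
    then show ?thesis using True by (simp add: divide_neg_pos)
  next
    case False
    then have "a < 0" using a by simp
    have "t > 1" using powr_less_mono2_neg[OF \<open>a < 0\<close> x] by (simp add: t_def)
    then show ?thesis using \<open>a < 0\<close> by (simp add: divide_pos_neg)
  qed
  have u: "x powr (a+1) = t * x" using x by (simp add: t_def powr_add)
  have u': "x powr p = t * x" using u by (simp add: p_def)
  have u2: "1 + t * x = p * t * (1 + x)" using r1 by (simp add: p_def algebra_simps)
  have tx: "t powr (1/a) = x" using x a by (simp add: t_def powr_powr)
  have A: "(1 + x powr (a+1)) powr (1/a) = K * x * (1+x) powr (1/a)"
    using pp tp x by (simp add: u u2 powr_mult K_def tx)
  have B: "(1 + x) powr ((a+1)/a) = (1+x) powr (1/a) * (1 + x)"
  proof -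
    have "(a+1)/a = 1/a + 1" using a by (simp add: field_simps)
    then show ?thesis using x by (simp add: powr_add)
  qed
  have C: "(a+1) powr ((a+1)/a) = K * p"
  proof -
    have "(a+1)/a = 1/a + 1" using a by (simp add: field_simps)
    then show ?thesis using pp by (simp add: powr_add K_def p_def)
  qed
  have E: "(1 + x) powr (1/a) > 0" using x by simp
  have T1: "(a+1)/a * ((1 + x powr (a+1)) powr (1/a) / (1+x) powr ((a+1)/a)) * (x powr a - 1)
      / ((1 + x powr (a+1)) * (1+x)) = K * x / (1+x)^3 * ((t - 1)/(a*t))"
  proof -
    have "(a+1)/a * ((K * x * (1+x) powr (1/a)) / ((1+x) powr (1/a) * (1 + x))) * (t - 1) / ((p * t * (1 + x)) * (1+x))
       = K * x / (1+x)^3 * ((t - 1)/(a*t))"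
    proof -
      have g: "\<And>y q E. y > 0 \<Longrightarrow> q > 0 \<Longrightarrow> E > 0 \<Longrightarrow> q/a * ((K * x * E) / (E * y)) * (t - 1) / ((q * t * y) * y)
       = K * x / y^3 * ((t - 1)/(a*t))"
        using tp a(2) by (simp add: field_simps power3_eq_cube)
      show ?thesis using g[of "1+x" p "(1+x) powr (1/a)"] E x pp by (simp add: p_def)
    qed
    then show ?thesis unfolding A B by (simp only: u u2 t_def[symmetric])
  qed
  have T2: "((a+1) powr ((a+1)/a) / a) * (1/(1+x)^2 - (a+1) * x powr a / (1 + x powr (a+1))^2)
      = - (K * x / (1+x)^3 * (1 + x))"
  proof -
    have g: "\<And>y q. y > 0 \<Longrightarrow> q > 0 \<Longrightarrow> q*t - 1 = - a * t * (y - 1) \<Longrightarrow>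
        (K * q / a) * (1/y^2 - q*t/(q*t*y)^2) = - (K * (y - 1) / y^3 * y)"
    proof -
      fix y q :: real assume y: "y > 0" and q: "q > 0" and r: "q*t - 1 = - a * t * (y - 1)"
      have "1/y^2 - q*t/(q*t*y)^2 = (q*t - 1)/(q*t*y^2)" using y q tp by (simp add: field_simps power2_eq_square)
      also have "... = - a * t * (y - 1)/(q*t*y^2)" by (simp only: r)
      finally show "(K * q / a) * (1/y^2 - q*t/(q*t*y)^2) = - (K * (y - 1) / y^3 * y)"
        using y q tp a(2) apply (simp add: field_simps power2_eq_square power3_eq_cube) by algebra
    qed
    have "p*t - 1 = - a * t * ((1+x) - 1)" using r1 by (simp add: p_def algebra_simps)
    from g[OF _ pp this] x have "(K * p / a) * (1/(1+x)^2 - p*t/(p*t*(1+x))^2) = - (K * x / (1+x)^3 * (1 + x))"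
      by simp
    then show ?thesis unfolding C by (simp only: u u2 t_def[symmetric] p_def[symmetric] u')
  qed
  have "Dpsi a x = K * x / (1+x)^3 * ((t - 1)/(a*t) - (1 + x))"
    unfolding Dpsi_def T1 T2 by (simp only: right_diff_distrib diff_conv_add_uminus distrib_left mult_minus_right)
  moreover have "(t - 1)/(a*t) < 0" using sgn tp
    by (metis divide_divide_eq_left divide_neg_pos mult.commute)
  moreover have "K * x / (1+x)^3 > 0" using Kp x by simp
  moreover have "(t - 1)/(a*t) - (1 + x) < 0" using calculation(2) x by linarith
  ultimately show ?thesis by (metis mult_pos_neg)
qed


lemma lim_pow0:
  fixes c :: real assumes "c > 0"
  shows "((\<lambda>x. x powr c) \<longlongrightarrow> 0) (at_right 0)"
proof (rule tendsto_zero_powrI)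
  show "((\<lambda>x::real. x) \<longlongrightarrow> 0) (at_right 0)" by (rule tendsto_ident_at)
  show "\<forall>\<^sub>F x in at_right 0. 0 \<le> (x::real)"
    using eventually_at_right_less[of "0::real"] by (auto elim: eventually_mono)
qed (use assms in auto)

lemma Dpsi_pos_near0_pos:
  fixes a :: real assumes a: "a > 0"
  shows "\<forall>\<^sub>F x in at_right 0. Dpsi a x > 0"
proof -
  define C where "C = (a+1) powr ((a+1)/a)"
  have l1: "((\<lambda>x. x powr (a+1)) \<longlongrightarrow> 0) (at_right 0)" using a by (intro lim_pow0) simp
  have l2: "((\<lambda>x. x powr a) \<longlongrightarrow> 0) (at_right 0)" using a by (intro lim_pow0) simp
  have l3: "((\<lambda>x. (1 + x powr (a+1)) powr (1/a)) \<longlongrightarrow> (1 + 0) powr (1/a)) (at_right 0)"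
    by (intro tendsto_powr tendsto_add tendsto_const l1) simp
  have l4: "((\<lambda>x::real. (1 + x) powr ((a+1)/a)) \<longlongrightarrow> (1 + 0) powr ((a+1)/a)) (at_right 0)"
    by (intro tendsto_powr tendsto_add tendsto_const tendsto_ident_at) simp
  have lim: "((\<lambda>x. Dpsi a x) \<longlongrightarrow>
      (a+1)/a * ((1 + 0) powr (1/a) / (1+0) powr ((a+1)/a)) * (0 - 1) / ((1 + 0) * (1+0))
       + C / a * (1/(1+0)^2 - (a+1) * 0 / (1 + 0)^2)) (at_right 0)"
    unfolding Dpsi_def C_def
    by (intro tendsto_intros l1 l2 l3 l4 tendsto_ident_at) simp_all
  have "C > (a+1) powr 1"
    unfolding C_def using a by (subst powr_less_cancel_iff) (auto simp: field_simps)
  then have pos: "(a+1)/a * ((1 + 0) powr (1/a) / (1+0) powr ((a+1)/a)) * (0 - 1) / ((1 + 0) * (1+0))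
       + C / a * (1/(1+0)^2 - (a+1) * 0 / (1 + 0)^2) > 0"
    using a by (simp add: field_simps)
  show ?thesis using order_tendstoD(1)[OF lim pos] .
qed

lemma alg3:
  fixes a p Q C s U y :: real
  assumes "a \<noteq> 0" "s > 0" "U > 0" "y > 0"
  shows "a * (p/a * Q * (1/s - 1) / (U * y) + C/a * (1/y^2 - p * (1/s) / U^2))
      = (p * Q * (1 - s) / (U * y) - C * p / U^2) / s + C / y^2"
  using assms by (simp add: field_simps power2_eq_square)

lemma Dpsi_pos_near0_neg:
  fixes a :: real assumes a: "a > -1" "a < 0"
  shows "\<forall>\<^sub>F x in at_right 0. Dpsi a x > 0"
proof -
  define p where "p = a + 1"
  define C where "C = p powr (p/a)"
  have pp: "p > 0" "p < 1" using a by (auto simp: p_def)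
  have C1: "C > 1"
  proof -
    have "p/a < 0" using pp a by (simp add: divide_pos_neg)
    from powr_less_mono2_neg[OF this pp(1) pp(2)] show ?thesis by (simp add: C_def)
  qed
  define G where "G = (\<lambda>x. p * ((1 + x powr p) powr (1/a) / (1+x) powr (p/a)) * (1 - x powr (-a))
      / ((1 + x powr p) * (1 + x)) - C * p / (1 + x powr p)^2)"
  have l1: "((\<lambda>x. x powr p) \<longlongrightarrow> 0) (at_right 0)" using pp by (intro lim_pow0) simp
  have l2: "((\<lambda>x. x powr (-a)) \<longlongrightarrow> 0) (at_right 0)" using a by (intro lim_pow0) simp
  have l3: "((\<lambda>x. (1 + x powr p) powr (1/a)) \<longlongrightarrow> (1 + 0) powr (1/a)) (at_right 0)"
    by (intro tendsto_powr tendsto_add tendsto_const l1) simp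
  have l4: "((\<lambda>x::real. (1 + x) powr (p/a)) \<longlongrightarrow> (1 + 0) powr (p/a)) (at_right 0)"
    by (intro tendsto_powr tendsto_add tendsto_const tendsto_ident_at) simp
  have limG: "(G \<longlongrightarrow> p * ((1 + 0) powr (1/a) / (1+0) powr (p/a)) * (1 - 0)
      / ((1 + 0) * (1 + 0)) - C * p / (1 + 0)^2) (at_right 0)"
    unfolding G_def by (intro tendsto_intros l1 l2 l3 l4 tendsto_ident_at) simp_all
  define m where "m = p * (C - 1) / 2"
  have mp: "m > 0" using pp C1 by (simp add: m_def)
  have "p * ((1 + 0) powr (1/a) / (1+0) powr (p/a)) * (1 - 0)
      / ((1 + 0) * (1 + 0)) - C * p / (1 + 0)^2 < - m"
    using pp C1 by (simp add: m_def field_simps)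
  from order_tendstoD(2)[OF limG this] have ev1: "\<forall>\<^sub>F x in at_right 0. G x < - m" .
  have "m / C > 0" using mp C1 by simp
  from order_tendstoD(2)[OF l2 this] have ev2: "\<forall>\<^sub>F x in at_right 0. x powr (-a) < m / C" .
  show ?thesis
    using ev1 ev2 eventually_at_right_less[of "0::real"]
  proof eventually_elim
    case (elim x)
    define s where "s = x powr (-a)"
    have sp: "s > 0" using elim by (simp add: s_def)
    have ta: "x powr a = 1 / s" using elim by (simp add: s_def powr_minus divide_inverse)
    have Up: "1 + x powr p > 0" using elim by (simp add: add_pos_pos)
    have yp: "1 + x > 0" using elim by simp
    have eq: "a * Dpsi a x = G x / s + C / (1 + x)^2"
      using alg3[OF _ sp Up yp, of a p "(1 + x powr p) powr (1/a) / (1+x) powr (p/a)" C] a(2)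
      by (simp add: Dpsi_def G_def p_def[symmetric] C_def ta s_def)
    have "C / (1+x)^2 \<le> C" using yp C1 elim
      by (simp add: divide_le_eq)
    moreover have "G x / s < - m / s" using divide_strict_right_mono[OF elim(1) sp] .
    moreover have "- m / s < - C"
    proof -
      have "C * s < m" using elim C1 by (simp add: s_def pos_less_divide_eq mult.commute)
      then show ?thesis using sp by (simp add: field_simps)
    qed
    ultimately have "a * Dpsi a x < 0" using eq by linarith
    then show ?case using a(2) by (simp add: mult_less_0_iff)
  qed
qed


lemma psi0_cont:
  fixes a b :: real assumes a: "a > -1"
  shows "continuous_on {0..b} (psi0 a)"
proof -
  have c1: "continuous_on {0..b} (\<lambda>x::real. x powr (a+1))"
    by (rule continuous_on_powr') (use a in \<open>auto intro: continuous_intros\<close>)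
  have nn: "\<And>x::real. 1 + x powr (a+1) \<noteq> 0" by (smt (verit) powr_ge_zero)
  have "continuous_on {0..b} (\<lambda>x. (1 + x powr (a + 1)) powr (1 / a) / (1 + x) powr ((a + 1) / a)
     + ((a + 1) powr ((a + 1) / a) / a) * (1 / (1 + x powr (a + 1)) - 1 / (1 + x)))"
    by (intro continuous_intros c1) (auto simp: nn)
  then show ?thesis by (simp add: psi0_def[abs_def])
qed

theorem corollary2p6:
  fixes \<alpha> \<eta>1 :: real
  assumes "\<alpha> > -1" and "\<alpha> \<noteq> 0"
    and "0 < \<eta>1" and "\<eta>1 < 1"
    and "\<eta>1 powr \<alpha> = 1 / (1 + \<alpha> * (\<eta>1 + 1))"
  shows "\<exists>\<eta>max. 0 < \<eta>max \<and> \<eta>max < \<eta>1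
           \<and> (\<forall>\<eta>\<in>{0..\<eta>1}. psi0 \<alpha> \<eta> \<le> psi0 \<alpha> \<eta>max)
           \<and> ((\<lambda>\<eta>. psi0 \<alpha> \<eta>) has_real_derivative 0) (at \<eta>max)"
proof -
  note a = assms(1,2)
  have ev: "\<forall>\<^sub>F x in at_right 0. Dpsi \<alpha> x > 0"
  proof (cases "\<alpha> > 0")
    case True then show ?thesis by (rule Dpsi_pos_near0_pos)
  next
    case False then show ?thesis using a by (intro Dpsi_pos_near0_neg) auto
  qed
  then obtain b where b: "b > 0" "\<And>y. y > 0 \<Longrightarrow> y < b \<Longrightarrow> Dpsi \<alpha> y > 0"
    unfolding eventually_at_right_field by auto
  define c where "c = min b \<eta>1"
  have c: "0 < c" "c \<le> \<eta>1" using b assms(3) by (auto simp: c_def)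
  have inc: "psi0 \<alpha> 0 < psi0 \<alpha> c"
  proof (rule DERIV_pos_imp_increasing_open[OF c(1)])
    fix x assume "0 < x" "x < c"
    then show "\<exists>y. DERIV (psi0 \<alpha>) x :> y \<and> y > 0"
      using psi0_deriv[OF a \<open>0 < x\<close>] b(2)[of x] by (auto simp: c_def)
  qed (rule psi0_cont[OF a(1)])
  have dneg: "Dpsi \<alpha> \<eta>1 < 0" using Dpsi_eta1_neg[OF a assms(3,4,5)] .
  obtain d where d: "d > 0" "\<And>h. h > 0 \<Longrightarrow> h < d \<Longrightarrow> psi0 \<alpha> \<eta>1 < psi0 \<alpha> (\<eta>1 - h)"
    using DERIV_neg_dec_left[OF psi0_deriv[OF a assms(3)] dneg] by auto
  define h where "h = min (d/2) (\<eta>1/2)"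
  have h: "h > 0" "h < d" "h < \<eta>1" using d assms(3) by (auto simp: h_def)
  have dec: "psi0 \<alpha> \<eta>1 < psi0 \<alpha> (\<eta>1 - h)" using d(2)[OF h(1,2)] .
  obtain m where m: "m \<in> {0..\<eta>1}" "\<And>y. y \<in> {0..\<eta>1} \<Longrightarrow> psi0 \<alpha> y \<le> psi0 \<alpha> m"
  proof -
    have "{0..\<eta>1} \<noteq> {}" using assms(3) by simp
    from continuous_attains_sup[OF compact_Icc this psi0_cont[OF a(1)]] show ?thesis using that by auto
  qed
  have m0: "m \<noteq> 0" using m(2)[of c] c inc by auto
  have m1: "m \<noteq> \<eta>1" using m(2)[of "\<eta>1 - h"] h dec by auto
  have mi: "0 < m" "m < \<eta>1" using m(1) m0 m1 by auto
  have D: "DERIV (psi0 \<alpha>) m :> Dpsi \<alpha> m" by (rule psi0_deriv[OF a mi(1)])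
  have "Dpsi \<alpha> m = 0"
  proof (rule DERIV_local_max[OF D])
    show "0 < min m (\<eta>1 - m)" using mi by simp
    show "\<forall>y. \<bar>m - y\<bar> < min m (\<eta>1 - m) \<longrightarrow> psi0 \<alpha> y \<le> psi0 \<alpha> m"
    proof (intro allI impI)
      fix y assume "\<bar>m - y\<bar> < min m (\<eta>1 - m)"
      then have "y \<in> {0..\<eta>1}" by (auto simp: abs_if split: if_splits)
      then show "psi0 \<alpha> y \<le> psi0 \<alpha> m" by (rule m(2))
    qed
  qed
  then show ?thesis using mi m(2) D by auto
qed

end
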